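(* Let $L\subseteq B_p$ be an integral lattice with $\mathbb{Z}\subseteq L$. Then \[\theta_L(q)=\Big(\sum_{\substack{\beta\in\tau(L)\\ N(\beta)\equiv 0\ (\mathrm{mod}\ 4)}}q^{N(\beta)/4}\Big)\theta_0(q)+\Big(\sum_{\substack{\beta\in\tau(L)\\ N(\beta)\equiv 3\ (\mathrm{mod}\ 4)}}q^{(1+N(\beta))/4}\Big)\theta_1(q).\]
   Context: $B_p$ is the quaternion algebra over $\mathbb{Q}$ ramified exactly at the prime $p$ and $\infty$, with canonical involution $\overline{x}$, reduced norm $N(x)=x\overline{x}$ and reduced trace $\mathrm{Tr}(x)=x+\overline{x}$. A lattice $L\subseteq B_p$ is integral if $N(x),\mathrm{Tr}(x)\in\mathbb{Z}$ for all $x\in L$. $\tau:B_p\to B_p$ is $\tau(x)=2x-\mathrm{Tr}(x)$ and $\tau(L)=\{\tau(x):x\in L\}$. $\theta_L(q)=\sum_{x\in L}q^{N(x)}$, $\theta_0(q)=\sum_{n\in\mathbb{Z}}q^{n^2}$, $\theta_1(q)=\sum_{n\in\mathbb{Z}}q^{n^2+n}$. *)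

theory Defs
  imports "HOL-Computational_Algebra.Formal_Power_Series" "HOL-Number_Theory.Cong"
    "HOL-Computational_Algebra.Primes"
begin

text \<open>Quaternion algebra (a,b)_Q over Q: elements x0 + x1 i + x2 j + x3 k with
  i^2 = a, j^2 = b, ij = -ji = k.\<close>

datatype quat = Quat (qre: rat) (qi: rat) (qj: rat) (qk: rat)

definition qzero :: quat where "qzero = Quat 0 0 0 0"

definition qadd :: "quat \<Rightarrow> quat \<Rightarrow> quat" where
  "qadd x y = Quat (qre x + qre y) (qi x + qi y) (qj x + qj y) (qk x + qk y)"

definition qsmul :: "rat \<Rightarrow> quat \<Rightarrow> quat" where
  "qsmul r x = Quat (r * qre x) (r * qi x) (r * qj x) (r * qk x)"

definition qof_rat :: "rat \<Rightarrow> quat" where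
  "qof_rat r = Quat r 0 0 0"

definition qconj :: "quat \<Rightarrow> quat" where
  "qconj x = Quat (qre x) (- qi x) (- qj x) (- qk x)"

definition qmul :: "rat \<Rightarrow> rat \<Rightarrow> quat \<Rightarrow> quat \<Rightarrow> quat" where
  "qmul a b x y = Quat
     (qre x * qre y + a * qi x * qi y + b * qj x * qj y - a * b * qk x * qk y)
     (qre x * qi y + qi x * qre y - b * qj x * qk y + b * qk x * qj y)
     (qre x * qj y + qj x * qre y + a * qi x * qk y - a * qk x * qi y)
     (qre x * qk y + qk x * qre y + qi x * qj y - qj x * qi y)"

text \<open>Reduced norm N(x) = x * conj x and reduced trace Tr(x) = x + conj x (both scalars).\<close>
definition qnorm :: "rat \<Rightarrow> rat \<Rightarrow> quat \<Rightarrow> rat" where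
  "qnorm a b x = qre (qmul a b x (qconj x))"

definition qtr :: "quat \<Rightarrow> rat" where
  "qtr x = qre (qadd x (qconj x))"

definition qtau :: "quat \<Rightarrow> quat" where
  "qtau x = qadd (qsmul 2 x) (qof_rat (- qtr x))"

text \<open>Isotropy of z^2 = a x^2 + b y^2 over Q_l (l prime): after scaling a, b to integers
  A = a d_a^2, B = b d_b^2, there are primitive integer solutions modulo every power of l.\<close>
definition int_sq_scale :: "rat \<Rightarrow> int" where
  "int_sq_scale r = fst (quotient_of r) * snd (quotient_of r)"

definition isotropic_at :: "int \<Rightarrow> rat \<Rightarrow> rat \<Rightarrow> bool" where
  "isotropic_at l a b \<longleftrightarrow> (\<forall>k::nat. \<exists>x y z :: int.
      \<not> (l dvd x \<and> l dvd y \<and> l dvd z) \<and>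
      [int_sq_scale a * x^2 + int_sq_scale b * y^2 = z^2] (mod l^k))"

text \<open>(a,b)_Q is ramified exactly at p and infinity.\<close>
definition ramified_exactly_at :: "rat \<Rightarrow> rat \<Rightarrow> int \<Rightarrow> bool" where
  "ramified_exactly_at a b p \<longleftrightarrow> a \<noteq> 0 \<and> b \<noteq> 0 \<and> prime p \<and>
     (a < 0 \<and> b < 0) \<and>
     \<not> isotropic_at p a b \<and>
     (\<forall>l. prime l \<and> l \<noteq> p \<longrightarrow> isotropic_at l a b)"

definition lincomb4 :: "(nat \<Rightarrow> rat) \<Rightarrow> (nat \<Rightarrow> quat) \<Rightarrow> quat" where
  "lincomb4 c e = qadd (qadd (qsmul (c 0) (e 0)) (qsmul (c 1) (e 1)))
                       (qadd (qsmul (c 2) (e 2)) (qsmul (c 3) (e 3)))"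

definition is_lattice :: "quat set \<Rightarrow> bool" where
  "is_lattice L \<longleftrightarrow> (\<exists>e. (\<forall>c. lincomb4 c e = qzero \<longrightarrow> (\<forall>i<4. c i = 0)) \<and>
       L = {lincomb4 (\<lambda>i. of_int (n i)) e | n :: nat \<Rightarrow> int. True})"

definition integral_lattice :: "rat \<Rightarrow> rat \<Rightarrow> quat set \<Rightarrow> bool" where
  "integral_lattice a b L \<longleftrightarrow> is_lattice L \<and>
     (\<forall>x\<in>L. qnorm a b x \<in> \<int> \<and> qtr x \<in> \<int>)"

definition theta_L :: "rat \<Rightarrow> rat \<Rightarrow> quat set \<Rightarrow> int fps" where
  "theta_L a b L = Abs_fps (\<lambda>n. int (card {x\<in>L. qnorm a b x = of_nat n}))"

definition theta0 :: "int fps" where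
  "theta0 = Abs_fps (\<lambda>n. int (card {m::int. m^2 = int n}))"

definition theta1 :: "int fps" where
  "theta1 = Abs_fps (\<lambda>n. int (card {m::int. m^2 + m = int n}))"

definition tau_sum0 :: "rat \<Rightarrow> rat \<Rightarrow> quat set \<Rightarrow> int fps" where
  "tau_sum0 a b L = Abs_fps (\<lambda>n. int (card {\<beta>\<in>qtau ` L. \<exists>m::int.
      qnorm a b \<beta> = of_int m \<and> m mod 4 = 0 \<and> m div 4 = int n}))"

definition tau_sum3 :: "rat \<Rightarrow> rat \<Rightarrow> quat set \<Rightarrow> int fps" where
  "tau_sum3 a b L = Abs_fps (\<lambda>n. int (card {\<beta>\<in>qtau ` L. \<exists>m::int.
      qnorm a b \<beta> = of_int m \<and> m mod 4 = 3 \<and> (1 + m) div 4 = int n}))"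

end

theory Submission
  imports Defs
begin

lemma qnorm_eq: "qnorm a b x = qre x ^2 - a * qi x^2 - b*qj x^2 + a*b*qk x^2"
  by (simp add: qnorm_def qmul_def qconj_def power2_eq_square)
lemma qtr_eq: "qtr x = 2 * qre x" by (simp add: qtr_def qadd_def qconj_def)
lemma qtau_eq: "qtau x = Quat 0 (2*qi x) (2*qj x) (2*qk x)"
  by (simp add: qtau_def qadd_def qsmul_def qof_rat_def qtr_eq)
lemma qnorm_tau: "qnorm a b (qtau x) = 4 * qnorm a b x - qtr x ^2"
  by (simp add: qnorm_eq qtau_eq qtr_eq power2_eq_square algebra_simps)
lemma qtau_shift: "qtau (qadd x (qof_rat r)) = qtau x"
  by (simp add: qtau_eq qadd_def qof_rat_def)
lemma qtr_shift: "qtr (qadd x (qof_rat r)) = qtr x + 2*r"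
  by (simp add: qtr_eq qadd_def qof_rat_def algebra_simps)
lemma tau_inj: "qtau x = qtau y \<Longrightarrow> qre x = qre y \<Longrightarrow> x = y"
  by (cases x; cases y) (simp add: qtau_eq)

lemma lincomb_add: "qadd (lincomb4 c e) (lincomb4 d e) = lincomb4 (\<lambda>i. c i + d i) e"
  by (simp add: lincomb4_def qadd_def qsmul_def algebra_simps)

lemma lincomb_coords:
  "qre (lincomb4 c e) = c 0 * qre (e 0) + c 1 * qre (e 1) + c 2 * qre (e 2) + c 3 * qre (e 3)"
  "qi (lincomb4 c e) = c 0 * qi (e 0) + c 1 * qi (e 1) + c 2 * qi (e 2) + c 3 * qi (e 3)"
  "qj (lincomb4 c e) = c 0 * qj (e 0) + c 1 * qj (e 1) + c 2 * qj (e 2) + c 3 * qj (e 3)"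
  "qk (lincomb4 c e) = c 0 * qk (e 0) + c 1 * qk (e 1) + c 2 * qk (e 2) + c 3 * qk (e 3)"
  by (simp_all add: lincomb4_def qadd_def qsmul_def)

lemma comb_int:
  fixes n :: "nat \<Rightarrow> int" and e :: "nat \<Rightarrow> quat"
  assumes "\<forall>i<4. of_int D * f (e i) \<in> (\<int>::rat set)"
  shows "of_int D * (of_int (n 0) * f (e 0) + of_int (n 1) * f (e 1) + of_int (n 2) * f (e 2) + of_int (n 3) * f (e 3)) \<in> (\<int>::rat set)"
proof -
  have h: "\<And>i::nat. i < 4 \<Longrightarrow> of_int (n i) * (of_int D * f (e i)) \<in> (\<int>::rat set)"
    by (rule Ints_mult[OF Ints_of_int]) (use assms in auto)
  have "of_int D * (of_int (n 0) * f (e 0) + of_int (n 1) * f (e 1) + of_int (n 2) * f (e 2) + of_int (n 3) * f (e 3))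
    = of_int (n 0) * (of_int D * f (e 0)) + of_int (n 1) * (of_int D * f (e 1)) + of_int (n 2) * (of_int D * f (e 2)) + of_int (n 3) * (of_int D * f (e 3))"
    by (simp add: algebra_simps)
  also have "\<dots> \<in> \<int>" using h[of 0] h[of 1] h[of 2] h[of 3] by (intro Ints_add) auto
  finally show ?thesis .
qed

lemma common_den: "finite S \<Longrightarrow> \<exists>D::int. D > 0 \<and> (\<forall>r\<in>S. of_int D * r \<in> (\<int>::rat set))"
proof (induction rule: finite_induct)
  case empty then show ?case by (intro exI[of _ 1]) auto
next
  case (insert r S)
  then obtain D where D: "D > 0" "\<forall>r\<in>S. of_int D * r \<in> (\<int>::rat set)" by auto
  obtain u d where q: "quotient_of r = (u, d)" by (cases "quotient_of r")
  have d: "d > 0" using quotient_of_denom_pos' [of r] q by simp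
  have r: "r = of_int u / of_int d" using quotient_of_div[OF q] .
  have "of_int (D*d) * r = of_int (D * u)" using d r by (simp add: field_simps)
  hence 1: "of_int (D*d) * r \<in> (\<int>::rat set)" by (metis Ints_of_int)
  have 2: "of_int (D*d) * s \<in> (\<int>::rat set)" if "s \<in> S" for s
  proof -
    have "of_int (D*d) * s = of_int d * (of_int D * s)" by simp
    also have "\<dots> \<in> \<int>" by (rule Ints_mult[OF Ints_of_int]) (use D that in auto)
    finally show ?thesis .
  qed
  show ?case using 1 2 D d by (intro exI[of _ "D*d"]) auto
qed

lemma fin_rat: assumes "D > 0" shows "finite {r::rat. of_int D * r \<in> \<int> \<and> r^2 \<le> C}"
proof -
  define K where "K = \<lceil>of_int D * (C+1)\<rceil>"
  have "{r::rat. of_int D * r \<in> \<int> \<and> r^2 \<le> C} \<subseteq> (\<lambda>k. of_int k / of_int D) ` {-K..K}"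
  proof
    fix r assume "r \<in> {r::rat. of_int D * r \<in> \<int> \<and> r^2 \<le> C}"
    hence r: "of_int D * r \<in> \<int>" "r^2 \<le> C" by auto
    obtain k where k: "of_int k = of_int D * r" using r(1) Ints_cases by metis
    have ab: "\<bar>r\<bar> \<le> C + 1"
    proof (cases "\<bar>r\<bar> \<le> 1")
      case True then show ?thesis using r(2) zero_le_power2[of r] by linarith
    next
      case False
      hence "\<bar>r\<bar> * 1 \<le> \<bar>r\<bar> * \<bar>r\<bar>" by (intro mult_left_mono) auto
      hence "\<bar>r\<bar> \<le> \<bar>r\<bar> * \<bar>r\<bar>" by simp
      also have "\<dots> = r^2" by (simp add: power2_eq_square abs_mult_self_eq)
      finally show ?thesis using r(2) by simp
    qed
    have "of_int \<bar>k\<bar> = of_int D * \<bar>r\<bar>" using k assms by (simp add: abs_mult)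
    also have "\<dots> \<le> of_int D * (C+1)" using ab assms by simp
    also have "\<dots> \<le> of_int K" unfolding K_def by (rule le_of_int_ceiling)
    finally have "\<bar>k\<bar> \<le> K" by linarith
    moreover have "r = of_int k / of_int D" using k assms by simp
    ultimately show "r \<in> (\<lambda>k. of_int k / of_int D) ` {-K..K}"
      by (intro image_eqI[of _ _ k]) auto
  qed
  thus ?thesis by (rule finite_subset) simp
qed

lemma norm_bounds:
  assumes "a < 0" "b < 0"
  shows "qre x ^2 \<le> qnorm a b x" "-a * qi x^2 \<le> qnorm a b x" "-b * qj x^2 \<le> qnorm a b x"
    "a*b * qk x^2 \<le> qnorm a b x"
proof -
  have 1: "0 \<le> -a * qi x^2" using assms by (intro mult_nonneg_nonneg) auto
  have 2: "0 \<le> -b * qj x^2" using assms by (intro mult_nonneg_nonneg) auto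
  have 3: "0 \<le> a*b * qk x^2" using assms by (simp add: mult_nonpos_nonpos)
  have 4: "0 \<le> qre x^2" by simp
  show "qre x ^2 \<le> qnorm a b x" "-a * qi x^2 \<le> qnorm a b x" "-b * qj x^2 \<le> qnorm a b x"
    "a*b * qk x^2 \<le> qnorm a b x" using 1 2 3 4 unfolding qnorm_eq by linarith+
qed


lemma sq_mod4: "((t::int)^2) mod 4 = t mod 2"
proof -
  define q where "q = t div 2"
  define r where "r = t mod 2"
  have t: "t = 2*q + r" unfolding q_def r_def by simp
  have r: "r = 0 \<or> r = 1" unfolding r_def by auto
  have "t^2 = r + (q^2 + q*r)*4" using r unfolding t by (auto simp: power2_eq_square algebra_simps)
  hence "t^2 mod 4 = r mod 4" by (simp only: mod_mult_self1)
  thus ?thesis using r unfolding r_def by auto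
qed

lemma par: "(4*N1 - t1^2 :: int) = 4*N2 - t2^2 \<Longrightarrow> t1 div 2 = t2 div 2 \<Longrightarrow> t1 = t2"
proof -
  assume e: "(4*N1 - t1^2 :: int) = 4*N2 - t2^2" and d: "t1 div 2 = t2 div 2"
  have "t1^2 = t2^2 + (N1 - N2)*4" using e by simp
  hence "t1^2 mod 4 = t2^2 mod 4" by (simp only: mod_mult_self1)
  hence "t1 mod 2 = t2 mod 2" by (simp add: sq_mod4)
  thus ?thesis using d by (metis div_mult_mod_eq)
qed

lemma floor_half: "\<lfloor>(of_int t :: rat) / 2\<rfloor> = t div 2"
  using floor_divide_of_int_eq[of t 2] by simp


lemma le_div: "0 < (c::rat) \<Longrightarrow> c * y \<le> z \<Longrightarrow> y \<le> z / c"
  by (simp add: pos_le_divide_eq mult.commute)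

theorem lemma4p1:
  fixes a b :: rat and p :: int and L :: "quat set"
  assumes "ramified_exactly_at a b p"
    and "integral_lattice a b L"
    and "\<forall>n::int. qof_rat (of_int n) \<in> L"
  shows "theta_L a b L = tau_sum0 a b L * theta0 + tau_sum3 a b L * theta1"
proof -
  have ab: "a < 0" "b < 0" using assms(1) by (auto simp: ramified_exactly_at_def)
  obtain e where Ldef: "L = {lincomb4 (\<lambda>i. of_int (n i)) e | n :: nat \<Rightarrow> int. True}"
    using assms(2) by (auto simp: integral_lattice_def is_lattice_def)
  have intL: "qnorm a b x \<in> \<int> \<and> qtr x \<in> \<int>" if "x \<in> L" for x
    using assms(2) that by (auto simp: integral_lattice_def)
  have closed: "qadd x y \<in> L" if xy: "x \<in> L" "y \<in> L" for x y
  proof -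
    obtain c d where "x = lincomb4 (\<lambda>i. of_int (c i)) e" "y = lincomb4 (\<lambda>i. of_int (d i)) e"
      using Ldef xy by auto
    hence "qadd x y = lincomb4 (\<lambda>i. of_int ((\<lambda>i. c i + d i) i)) e" by (simp add: lincomb_add)
    thus "qadd x y \<in> L" using Ldef by (auto intro!: exI[of _ "\<lambda>i. c i + d i"])
  qed
  have shift: "qadd x (qof_rat (of_int k)) \<in> L" if "x \<in> L" for x k
    using closed assms(3) that by blast
  have fin: "finite {x\<in>L. qnorm a b x = of_nat n}" for n
  proof -
    obtain D where D: "D>0" "\<forall>r\<in>(\<Union>i\<in>{..<4::nat}. {qre (e i), qi (e i), qj (e i), qk (e i)}). of_int D * r \<in> \<int>"
      using common_den[of "\<Union>i\<in>{..<4::nat}. {qre (e i), qi (e i), qj (e i), qk (e i)}"] by auto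
    have Dx: "of_int D * qre x \<in> \<int> \<and> of_int D * qi x \<in> \<int> \<and> of_int D * qj x \<in> \<int> \<and> of_int D * qk x \<in> \<int>"
      if "x \<in> L" for x
    proof -
      obtain c where x: "x = lincomb4 (\<lambda>i. of_int (c i)) e" using Ldef \<open>x\<in>L\<close> by auto
      have h1: "\<forall>i<4. of_int D * qre (e i) \<in> \<int>" using D(2) by auto
      have h2: "\<forall>i<4. of_int D * qi (e i) \<in> \<int>" using D(2) by auto
      have h3: "\<forall>i<4. of_int D * qj (e i) \<in> \<int>" using D(2) by auto
      have h4: "\<forall>i<4. of_int D * qk (e i) \<in> \<int>" using D(2) by auto
      show ?thesis unfolding x lincomb_coords
        using comb_int[OF h1, of c] comb_int[OF h2, of c] comb_int[OF h3, of c] comb_int[OF h4, of c]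
        by simp
    qed
    define R where "R C = {r::rat. of_int D * r \<in> \<int> \<and> r^2 \<le> C}" for C
    have abp: "0 < a*b" using ab by (simp add: mult_neg_neg)
    have "{x\<in>L. qnorm a b x = of_nat n} \<subseteq> (\<lambda>(r0,r1,r2,r3). Quat r0 r1 r2 r3) `
       (R (of_nat n) \<times> R (of_nat n / (-a)) \<times> R (of_nat n / (-b)) \<times> R (of_nat n / (a*b)))"
    proof
      fix x assume "x \<in> {x\<in>L. qnorm a b x = of_nat n}"
      hence x: "x\<in>L" "qnorm a b x = of_nat n" by auto
      have b1: "qre x^2 \<le> of_nat n" using norm_bounds(1)[OF ab, of x] x by simp
      have "-a * qi x^2 \<le> of_nat n" using norm_bounds(2)[OF ab, of x] x by simp
      hence b2: "qi x^2 \<le> of_nat n / (-a)" using ab by (intro le_div) auto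
      have "-b * qj x^2 \<le> of_nat n" using norm_bounds(3)[OF ab, of x] x by simp
      hence b3: "qj x^2 \<le> of_nat n / (-b)" using ab by (intro le_div) auto
      have "a*b * qk x^2 \<le> of_nat n" using norm_bounds(4)[OF ab, of x] x by simp
      hence b4: "qk x^2 \<le> of_nat n / (a*b)" using abp by (intro le_div) auto
      show "x \<in> (\<lambda>(r0,r1,r2,r3). Quat r0 r1 r2 r3) `
       (R (of_nat n) \<times> R (of_nat n / (-a)) \<times> R (of_nat n / (-b)) \<times> R (of_nat n / (a*b)))"
        using Dx[OF x(1)] b1 b2 b3 b4 unfolding R_def
        by (intro image_eqI[of _ _ "(qre x, qi x, qj x, qk x)"]) auto
    qed
    moreover have "finite (R C)" for C unfolding R_def using fin_rat[OF D(1)] .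
    ultimately show ?thesis
      by (elim finite_subset) (intro finite_imageI finite_cartesian_product; simp)
  qed
  show ?thesis
  proof (rule fps_ext)
    fix n
    define A where "A = {x\<in>L. qnorm a b x = of_nat n}"
    define T0 where "T0 i = {\<beta>\<in>qtau ` L. \<exists>m::int. qnorm a b \<beta> = of_int m \<and> m mod 4 = 0 \<and> m div 4 = int i}" for i
    define T3 where "T3 i = {\<beta>\<in>qtau ` L. \<exists>m::int. qnorm a b \<beta> = of_int m \<and> m mod 4 = 3 \<and> (1 + m) div 4 = int i}" for i
    define M0 where "M0 j = {m::int. m^2 = int j}" for j
    define M1 where "M1 j = {m::int. m^2 + m = int j}" for j
    define P where "P i = T0 i \<times> M0 (n-i) \<union> T3 i \<times> M1 (n-i)" for i
    define F where "F x = (qtau x, \<lfloor>qtr x / 2\<rfloor>)" for x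
    have ints: "\<exists>N t. qnorm a b x = of_int N \<and> qtr x = of_int t \<and> F x = (qtau x, t div 2)
       \<and> qnorm a b (qtau x) = of_int (4*N - t^2)" if xL0: "x \<in> L" for x
    proof -
      obtain N where N: "qnorm a b x = of_int N" using intL[OF xL0] Ints_cases by metis
      obtain t where t: "qtr x = of_int t" using intL[OF xL0] Ints_cases by metis
      show ?thesis using N t by (intro exI[of _ N] exI[of _ t]) (simp add: F_def floor_half qnorm_tau)
    qed
    have inj: "inj_on F L"
    proof
      fix x y assume xy: "x \<in> L" "y \<in> L" "F x = F y"
      obtain N1 t1 where 1: "qnorm a b x = of_int N1" "qtr x = of_int t1" "F x = (qtau x, t1 div 2)"
        "qnorm a b (qtau x) = of_int (4*N1 - t1^2)" using ints[OF xy(1)] by blast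
      obtain N2 t2 where 2: "qnorm a b y = of_int N2" "qtr y = of_int t2" "F y = (qtau y, t2 div 2)"
        "qnorm a b (qtau y) = of_int (4*N2 - t2^2)" using ints[OF xy(2)] by blast
      have tau: "qtau x = qtau y" and d: "t1 div 2 = t2 div 2" using 1 2 xy(3) by auto
      have "(of_int (4*N1 - t1^2) :: rat) = of_int (4*N2 - t2^2)" using 1(4) 2(4) tau by simp
      hence "4*N1 - t1^2 = 4*N2 - t2^2" by (simp only: of_int_eq_iff)
      hence "t1 = t2" using par d by blast
      hence "qre x = qre y" using 1(2) 2(2) by (simp add: qtr_eq)
      thus "x = y" using tau tau_inj by blast
    qed
    have img1: "F ` A \<subseteq> (\<Union>i\<in>{..n}. P i)"
    proof
      fix z assume "z \<in> F ` A"
      then obtain x where x: "x \<in> L" "qnorm a b x = of_nat n" "z = F x" unfolding A_def by auto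
      obtain N t where 1: "qnorm a b x = of_int N" "qtr x = of_int t" "F x = (qtau x, t div 2)"
        "qnorm a b (qtau x) = of_int (4*N - t^2)" using ints[OF x(1)] by blast
      have Nn: "N = int n" using 1(1) x(2) by (metis of_int_eq_iff of_int_of_nat_eq)
      have "qre x ^2 \<le> qnorm a b x" by (rule norm_bounds(1)[OF ab])
      moreover have tt: "(of_int t::rat) = 2*qre x" using 1(2) by (simp add: qtr_eq)
      moreover have "(of_int (t^2)::rat) = 4*qre x^2" by (simp add: tt power2_eq_square)
      ultimately have "(of_int (t^2) :: rat) \<le> of_int (4*N)" using 1(1) by simp
      hence tb: "t^2 \<le> 4 * int n" using Nn by (simp only: of_int_le_iff)
      define s where "s = t div 2"
      have tq: "t = 2*s + t mod 2" unfolding s_def by simp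
      have "t mod 2 = 0 \<or> t mod 2 = 1" by auto
      then show "z \<in> (\<Union>i\<in>{..n}. P i)"
      proof
        assume r: "t mod 2 = 0"
        hence ts: "t = 2*s" using tq by simp
        define i where "i = nat (int n - s^2)"
        have "4*s^2 \<le> 4 * int n" using tb ts by (simp add: power2_eq_square)
        hence ii: "int i = int n - s^2" unfolding i_def by simp
        have m: "4*N - t^2 = int i * 4" using ii Nn ts by (simp add: power2_eq_square algebra_simps)
        have "qtau x \<in> T0 i" unfolding T0_def using x(1) 1(4) m
          by (auto intro!: exI[of _ "int i * 4"])
        moreover have "i \<le> n" using ii zero_le_power2[of s] by linarith
        moreover have "s \<in> M0 (n-i)" unfolding M0_def using ii calculation by (simp add: of_nat_diff)
        ultimately show ?thesis using x(3) 1(3) unfolding P_def s_def by auto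
      next
        assume r: "t mod 2 = 1"
        hence ts: "t = 2*s + 1" using tq by simp
        define i where "i = nat (int n - s^2 - s)"
        have "4*s^2 + 4*s + 1 \<le> 4 * int n" using tb ts by (simp add: power2_eq_square algebra_simps)
        hence ii: "int i = int n - s^2 - s" unfolding i_def by simp
        have m: "4*N - t^2 = (int i - 1) * 4 + 3" using ii Nn ts by (simp add: power2_eq_square algebra_simps)
        have m3: "((int i - 1) * 4 + 3) mod 4 = 3" by presburger
        have m4: "(1 + ((int i - 1) * 4 + 3)) div 4 = int i" by presburger
        have T3i: "qtau x \<in> T3 i" unfolding T3_def using x(1) 1(4) m m3 m4
          by (auto intro!: exI[of _ "(int i - 1) * 4 + 3"])
        have "0 \<le> s*(s+1)" by (simp add: zero_le_mult_iff) arith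
        hence "0 \<le> s^2 + s" by (simp add: power2_eq_square algebra_simps)
        hence "i \<le> n" using ii by linarith
        moreover have "s \<in> M1 (n-i)" unfolding M1_def using ii calculation by (simp add: of_nat_diff)
        moreover note T3i
        ultimately show ?thesis using x(3) 1(3) unfolding P_def s_def by auto
      qed
    qed
    have img2: "(\<Union>i\<in>{..n}. P i) \<subseteq> F ` A"
    proof
      fix z assume "z \<in> (\<Union>i\<in>{..n}. P i)"
      then obtain i where zi: "i \<le> n" "z \<in> P i" by auto
      obtain \<beta> s where "z = (\<beta>, s)" by (cases z)
      hence z: "z = (\<beta>, s)" "i \<le> n" "(\<beta>, s) \<in> P i" using zi by auto
      from z(3) have "\<beta> \<in> qtau ` L" unfolding P_def T0_def T3_def by auto
      then obtain y where y: "y \<in> L" "\<beta> = qtau y" by auto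
      obtain N t where yN: "qnorm a b y = of_int N" "qtr y = of_int t"
        "qnorm a b (qtau y) = of_int (4*N - t^2)" using ints[OF y(1)] by blast
      define u where "u = t div 2"
      define x where "x = qadd y (qof_rat (of_int (s - u)))"
      have xL: "x \<in> L" unfolding x_def by (rule shift[OF y(1)])
      have taux: "qtau x = \<beta>" unfolding x_def y(2) by (rule qtau_shift)
      have trx: "qtr x = of_int (t + 2*(s-u))" unfolding x_def using yN(2) by (simp add: qtr_shift)
      have nx: "qnorm a b (qtau x) = 4 * qnorm a b x - qtr x ^2" by (rule qnorm_tau)
      have tq: "t = 2*u + t mod 2" unfolding u_def by simp
      from z(3) consider "\<beta> \<in> T0 i" "s \<in> M0 (n-i)" | "\<beta> \<in> T3 i" "s \<in> M1 (n-i)"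
        unfolding P_def by auto
      then show "z \<in> F ` A"
      proof cases
        case 1
        then obtain m where m: "qnorm a b \<beta> = of_int m" "m mod 4 = 0" "m div 4 = int i" "s^2 = int (n-i)"
          unfolding T0_def M0_def by auto
        have mm: "m = 4*N - t^2" using m(1) yN(3) y(2) by (simp only: of_int_eq_iff)
        have mi: "m = 4 * int i" using m(2,3) by presburger
        have "t^2 mod 4 = 0" using mm m(2) by presburger
        hence "t mod 2 = 0" by (simp add: sq_mod4)
        hence ts: "t + 2*(s-u) = 2*s" using tq by simp
        have "(of_int m :: rat) = 4 * qnorm a b x - (of_int (2*s))^2" using nx taux m(1) trx ts by simp
        hence "4 * qnorm a b x = of_int (4 * int i + 4 * s^2)" using mi by (simp add: power2_eq_square)
        also have "\<dots> = 4 * of_nat n" using m(4) z(2) by (simp add: of_nat_diff)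
        finally have qn: "qnorm a b x = of_nat n" by simp
        have "F x = (\<beta>, s)" unfolding F_def using taux trx ts by (simp add: floor_half)
        thus ?thesis using z(1) xL qn unfolding A_def by (intro image_eqI[of _ _ x]) auto
      next
        case 2
        then obtain m where m: "qnorm a b \<beta> = of_int m" "m mod 4 = 3" "(1 + m) div 4 = int i" "s^2 + s = int (n-i)"
          unfolding T3_def M1_def by auto
        have mm: "m = 4*N - t^2" using m(1) yN(3) y(2) by (simp only: of_int_eq_iff)
        have mi: "m = 4 * int i - 1" using m(2,3) by presburger
        have "t^2 mod 4 = 1" using mm m(2) by presburger
        hence "t mod 2 = 1" by (simp add: sq_mod4)
        hence ts: "t + 2*(s-u) = 2*s + 1" using tq by simp
        have trx2: "qtr x = of_int (2*s+1)" using trx unfolding ts .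
        have "(of_int m :: rat) = 4 * qnorm a b x - (of_int (2*s+1))^2" using nx taux m(1) trx2 by simp
        hence "4 * qnorm a b x = of_int (4 * int i + 4 * (s^2 + s))" using mi by (simp add: power2_eq_square algebra_simps)
        also have "\<dots> = 4 * of_nat n" using m(4) z(2) by (simp add: of_nat_diff)
        finally have qn: "qnorm a b x = of_nat n" by simp
        have "\<lfloor>(of_int (2*s+1) :: rat) / 2\<rfloor> = s" unfolding floor_half by presburger
        hence "F x = (\<beta>, s)" unfolding F_def using taux trx2 by simp
        thus ?thesis using z(1) xL qn unfolding A_def by (intro image_eqI[of _ _ x]) auto
      qed
    qed
    have bij: "bij_betw F A (\<Union>i\<in>{..n}. P i)"
      unfolding bij_betw_def using inj img1 img2 by (auto simp: A_def intro: inj_on_subset)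
    have finU: "finite (\<Union>i\<in>{..n}. P i)" using img1 img2 fin[of n] unfolding A_def
      by (metis finite_imageI subset_antisym)
    have finP: "finite (P i)" if "i \<le> n" for i using finU that by (meson UN_upper atMost_iff finite_subset)
    have disj: "\<forall>i\<in>{..n}. \<forall>j\<in>{..n}. i \<noteq> j \<longrightarrow> P i \<inter> P j = {}"
      unfolding P_def T0_def T3_def by auto
    have cardA: "card A = (\<Sum>i\<in>{..n}. card (P i))"
      using bij_betw_same_card[OF bij] card_UN_disjoint[of "{..n}" P] finP disj by simp
    have cardP: "card (P i) = card (T0 i) * card (M0 (n-i)) + card (T3 i) * card (M1 (n-i))"
      if "i \<le> n" for i
    proof -
      have f1: "finite (T0 i \<times> M0 (n-i))" and f2: "finite (T3 i \<times> M1 (n-i))"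
        using finP[OF that] unfolding P_def by auto
      have "T0 i \<inter> T3 i = {}" unfolding T0_def T3_def by auto
      hence "(T0 i \<times> M0 (n-i)) \<inter> (T3 i \<times> M1 (n-i)) = {}" by auto
      thus ?thesis unfolding P_def using card_Un_disjoint[OF f1 f2] by (simp add: card_cartesian_product)
    qed
    have "fps_nth (theta_L a b L) n = int (card A)" by (simp add: theta_L_def A_def)
    also have "\<dots> = (\<Sum>i\<in>{..n}. int (card (T0 i)) * int (card (M0 (n-i))) + int (card (T3 i)) * int (card (M1 (n-i))))"
      unfolding cardA of_nat_sum using cardP by (intro sum.cong) auto
    also have "\<dots> = fps_nth (tau_sum0 a b L * theta0 + tau_sum3 a b L * theta1) n"
      by (simp add: fps_mult_nth tau_sum0_def tau_sum3_def theta0_def theta1_def T0_def T3_def M0_def M1_def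
          atMost_atLeast0 sum.distrib)
    finally show "fps_nth (theta_L a b L) n = fps_nth (tau_sum0 a b L * theta0 + tau_sum3 a b L * theta1) n" .
  qed
qed

end
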